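(* Let $\mathbf x_1,\dots,\mathbf x_n\in\mathbb R^d$ with $\|\mathbf x_i\|_2=1$ be such that $\mathbf H^\infty$ is positive definite. Suppose $y_i=\sum_j\alpha_j(\boldsymbol\beta_j^\top\mathbf x_i)^{p_j}$ for all $i\in[n]$ (a finite sum), where for each $j$, $p_j\in\{1,2,4,6,8,\dots\}$, $\boldsymbol\beta_j\in\mathbb R^d$, $\alpha_j\in\mathbb R$. Then $$\sqrt{\mathbf y^\top(\mathbf H^\infty)^{-1}\mathbf y}\le3\sum_jp_j|\alpha_j|\,\|\boldsymbol\beta_j\|_2^{p_j}.$$
   Context: $\mathbf y=(y_1,\dots,y_n)^\top$; $\mathbf H^\infty_{ij}=\frac{\mathbf x_i^\top\mathbf x_j(\pi-\arccos(\mathbf x_i^\top\mathbf x_j))}{2\pi}$ (equivalently $\mathbb E_{\mathbf w\sim\mathcal N(\mathbf 0,\mathbf I)}[\mathbf x_i^\top\mathbf x_j\mathbb I\{\mathbf w^\top\mathbf x_i\ge0,\mathbf w^\top\mathbf x_j\ge0\}]$). *)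

theory Defs
  imports "HOL-Analysis.Analysis"
begin

definition H_inf :: "('n::finite \<Rightarrow> real ^ 'd::finite) \<Rightarrow> real ^ 'n ^ 'n" where
  "H_inf x = (\<chi> i j. (x i \<bullet> x j) * (pi - arccos (x i \<bullet> x j)) / (2 * pi))"

definition pos_def_mat :: "real ^ 'n ^ 'n \<Rightarrow> bool" where
  "pos_def_mat A \<longleftrightarrow> (\<forall>v. v \<noteq> 0 \<longrightarrow> v \<bullet> (A *v v) > 0)"

end

theory Submission imports Defs begin


definition ac :: "nat \<Rightarrow> real" where "ac n = (-1)^n * ((-1/2) gchoose n)"

lemma gchoose_Suc_rec: "(a::real) gchoose (Suc k) = (a gchoose k) * (a - of_nat k) / of_nat (Suc k)"
proof -
  have "fact (Suc k) * (a gchoose Suc k) = (\<Prod>i = 0..<Suc k. a - of_nat i)" by (rule gbinomial_mult_fact)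
  also have "\<dots> = (\<Prod>i = 0..<k. a - of_nat i) * (a - of_nat k)" by simp
  also have "\<dots> = fact k * (a gchoose k) * (a - of_nat k)" by (simp add: gbinomial_mult_fact)
  finally have "fact (Suc k) * (a gchoose Suc k) = fact k * (a gchoose k) * (a - of_nat k)" .
  hence "fact k * (of_nat (Suc k) * (a gchoose Suc k)) = fact k * ((a gchoose k) * (a - of_nat k))"
    by (simp only: fact_Suc of_nat_mult ac_simps)
  hence "of_nat (Suc k) * (a gchoose Suc k) = (a gchoose k) * (a - of_nat k)"
    by (subst (asm) mult_left_cancel) auto
  thus ?thesis by (simp add: field_simps del: of_nat_Suc)
qed

lemma ac_0 [simp]: "ac 0 = 1" by (simp add: ac_def)

lemma ac_Suc: "ac (Suc n) = ac n * (2 * real n + 1) / (2 * real n + 2)"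
  unfolding ac_def gchoose_Suc_rec by (simp add: field_simps)

lemma ac_pos: "ac n > 0"
  by (induction n) (auto simp: ac_Suc)

lemma ac_le1: "ac n \<le> 1"
proof (induction n)
  case (Suc n)
  have "ac (Suc n) = ac n * ((2 * real n + 1) / (2 * real n + 2))" by (simp add: ac_Suc)
  also have "\<dots> \<le> ac n" using ac_pos[of n] by (intro mult_left_le) auto
  finally have "ac (Suc n) \<le> ac n" .
  with Suc show ?case by simp
qed simp

lemma ac_lower: "ac n \<ge> 1 / (real n + 1)"
proof (induction n)
  case (Suc n)
  have "1 / (real (Suc n) + 1) \<le> (1 / (real n + 1)) * (2 * real n + 1) / (2 * real n + 2)"
  proof -
    have h: "(real n + 1) * (2 * real n + 2) \<le> (2 * real n + 1) * (real (Suc n) + 1)" by (simp add: algebra_simps)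
    have p: "(real n + 1) * (2 * real n + 2) > 0" by (simp add: add_pos_nonneg)
    have "1 / (real (Suc n) + 1) \<le> (2 * real n + 1) / ((real n + 1) * (2 * real n + 2))"
      using h p by (simp add: divide_simps)
    thus ?thesis by simp
  qed
  also have "\<dots> \<le> ac n * (2 * real n + 1) / (2 * real n + 2)"
    using Suc by (intro divide_right_mono mult_right_mono) auto
  finally show ?case by (simp add: ac_Suc)
qed simp

lemma ac_series: assumes "\<bar>t\<bar> < 1"
  shows "(\<lambda>n. ac n * t^(2*n)) sums inverse (sqrt (1 - t\<^sup>2))"
proof -
  have "t\<^sup>2 < 1" using assms by (simp add: abs_square_less_1)
  hence "\<bar>- t\<^sup>2\<bar> < 1" by simp
  from gen_binomial_real[OF this, of "-1/2"]
  have "(\<lambda>n. ((-1/2) gchoose n) * (- t\<^sup>2)^n) sums (1 + - t\<^sup>2) powr (-1/2)" .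
  moreover have "(\<lambda>n. ((-1/2) gchoose n) * (- t\<^sup>2)^n) = (\<lambda>n. ac n * t^(2*n))"
  proof
    fix n
    have "(- t\<^sup>2)^n = (-1)^n * (t\<^sup>2)^n"
      by (metis mult_minus1 power_mult_distrib)
    also have "(t\<^sup>2)^n = t^(2*n)" by (simp add: power_mult)
    finally show "((-1/2) gchoose n) * (- t\<^sup>2)^n = ac n * t^(2*n)"
      by (simp add: ac_def)
  qed
  moreover have "(1 + - t\<^sup>2) powr (-1/2) = inverse (sqrt (1 - t\<^sup>2))"
  proof -
    have pos: "1 - t\<^sup>2 > 0" using assms by (simp add: abs_square_less_1)
    have "(1 - t\<^sup>2) powr (-1/2) = inverse ((1 - t\<^sup>2) powr (1/2))"
      by (simp add: powr_minus)
    thus ?thesis using pos by (simp add: powr_half_sqrt)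
  qed
  ultimately show ?thesis by simp
qed

definition bc :: "nat \<Rightarrow> real" where "bc m = (if odd m then ac (m div 2) / real m else 0)"

lemma bc_bound: "\<bar>bc m\<bar> \<le> 1"
proof (cases "odd m")
  case True
  hence m: "real m \<ge> 1" by (cases m) auto
  have "\<bar>bc m\<bar> = ac (m div 2) / real m" using True ac_pos[of "m div 2"] m by (simp add: bc_def)
  also have "\<dots> \<le> ac (m div 2)" using m ac_pos[of "m div 2"] by (simp add: divide_le_eq mult_le_cancel_left1)
  also have "\<dots> \<le> 1" by (rule ac_le1)
  finally show ?thesis .
qed (simp add: bc_def)

lemma bc_summable: assumes "\<bar>t\<bar> < 1" shows "summable (\<lambda>m. bc m * t^m)"
proof (rule summable_comparison_test)
  show "\<exists>N. \<forall>n\<ge>N. norm (bc n * t ^ n) \<le> \<bar>t\<bar>^n"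
    using bc_bound by (auto simp: abs_mult power_abs intro!: mult_left_le_one_le)
  show "summable (\<lambda>n. \<bar>t\<bar>^n)" using assms by (simp add: summable_geometric)
qed

lemma diffs_bc: "diffs bc n = (if even n then ac (n div 2) else 0)"
  by (auto simp: diffs_def bc_def)

lemma arcsin_series0: assumes "\<bar>t\<bar> < 1" shows "(\<Sum>m. bc m * t^m) = arcsin t"
proof -
  define S where "S = (\<lambda>t. (\<Sum>m. bc m * t^m) - arcsin t)"
  have "DERIV S t :> 0" if t: "t \<in> {-1<..<1}" for t
  proof -
    have t1: "\<bar>t\<bar> < 1" using t by auto
    have d1: "DERIV (\<lambda>t. \<Sum>m. bc m * t^m) t :> (\<Sum>n. diffs bc n * t^n)"
      by (rule termdiffs_strong'[where K=1]) (use t1 bc_summable in auto)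
    have "(\<lambda>k. diffs bc (2*k) * t^(2*k)) sums inverse (sqrt (1 - t\<^sup>2))"
      using ac_series[OF t1] by (simp add: diffs_bc)
    hence "(\<lambda>n. diffs bc n * t^n) sums inverse (sqrt (1 - t\<^sup>2))"
      by (subst (asm) sums_mono_reindex[where g="\<lambda>k. 2*k"])
         (auto simp: strict_mono_def diffs_bc elim!: evenE)
    hence "(\<Sum>n. diffs bc n * t^n) = inverse (sqrt (1 - t\<^sup>2))" by (rule sums_unique[symmetric])
    with d1 have d1': "DERIV (\<lambda>t. \<Sum>m. bc m * t^m) t :> inverse (sqrt (1 - t\<^sup>2))" by simp
    have "DERIV S t :> inverse (sqrt (1 - t\<^sup>2)) - inverse (sqrt (1 - t\<^sup>2))"
      unfolding S_def by (intro derivative_intros d1' DERIV_arcsin) (use t in auto)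
    thus ?thesis by simp
  qed
  hence "S t = S 0" using DERIV_isconst3[of "-1" 1 t 0 S] assms by (auto simp: abs_less_iff)
  moreover have "S 0 = 0"
  proof -
    have "(\<lambda>m. bc m * 0^m) sums 0"
      using sums_zero by (rule sums_cong[THEN iffD1, rotated]) (auto simp: bc_def)
    thus ?thesis unfolding S_def using sums_unique by fastforce
  qed
  ultimately show ?thesis unfolding S_def by simp
qed

lemma arcsin_series: assumes "\<bar>t\<bar> < 1"
  shows "(\<lambda>n. ac n / (2 * real n + 1) * t^(2*n+1)) sums arcsin t"
proof -
  have "(\<lambda>m. bc m * t^m) sums arcsin t"
    using bc_summable[OF assms] arcsin_series0[OF assms] summable_sums by fastforce
  hence "(\<lambda>k. bc (2*k+1) * t^(2*k+1)) sums arcsin t"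
    by (subst sums_mono_reindex[where g="\<lambda>k. 2*k+1"])
       (auto simp: strict_mono_def bc_def elim!: oddE)
  thus ?thesis by (simp add: bc_def add.commute)
qed



definition hk :: "real \<Rightarrow> real" where "hk t = t * (pi - arccos t) / (2 * pi)"

lemma hk_series: assumes "\<bar>t\<bar> < 1"
  shows "(\<lambda>n. ac n / (2 * real n + 1) / (2 * pi) * t^(2*n+2)) sums (hk t - t / 4)"
proof -
  have "arcsin t = pi/2 - arccos t" using assms by (intro arcsin_arccos_eq) auto
  hence a: "arccos t = pi/2 - arcsin t" by simp
  have e: "hk t - t / 4 = t / (2 * pi) * arcsin t" unfolding hk_def a
    using pi_gt_zero by (simp add: field_simps)
  have "(\<lambda>n. t / (2 * pi) * (ac n / (2 * real n + 1) * t^(2*n+1))) sums (t / (2 * pi) * arcsin t)"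
    by (rule sums_mult) (rule arcsin_series[OF assms])
  moreover have "(\<lambda>n. t / (2 * pi) * (ac n / (2 * real n + 1) * t^(2*n+1))) =
      (\<lambda>n. ac n / (2 * real n + 1) / (2 * pi) * t^(2*n+2))"
    by (simp add: fun_eq_iff field_simps)
  ultimately show ?thesis using e by simp
qed

lemma sums_term_le: fixes f :: "nat \<Rightarrow> real" assumes "f sums s" "\<And>n. 0 \<le> f n" shows "f k \<le> s" "0 \<le> s"
proof -
  have "sum f {k} \<le> suminf f" by (rule sum_le_suminf) (use assms sums_summable in auto)
  thus "f k \<le> s" using assms sums_unique by fastforce
  show "0 \<le> s" using assms suminf_nonneg sums_summable sums_unique by metis
qed

lemma kernel_r:
  fixes u :: "'n::finite \<Rightarrow> real" and \<rho> :: "'n \<Rightarrow> 'n \<Rightarrow> real"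
  assumes rb: "\<And>i j. \<bar>\<rho> i j\<bar> \<le> 1"
    and psd: "\<And>q. 0 \<le> (\<Sum>i\<in>UNIV. \<Sum>j\<in>UNIV. u i * u j * \<rho> i j ^ q)"
    and r: "0 < r" "r < 1"
  shows "r / 4 * (\<Sum>i\<in>UNIV. \<Sum>j\<in>UNIV. u i * u j * \<rho> i j ^ 1)
          \<le> (\<Sum>i\<in>UNIV. \<Sum>j\<in>UNIV. u i * u j * hk (r * \<rho> i j))"
    and "ac k / (2 * real k + 1) / (2 * pi) * r^(2*k+2) * (\<Sum>i\<in>UNIV. \<Sum>j\<in>UNIV. u i * u j * \<rho> i j ^ (2*k+2))
          \<le> (\<Sum>i\<in>UNIV. \<Sum>j\<in>UNIV. u i * u j * hk (r * \<rho> i j))"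
proof -
  define Q where "Q q = (\<Sum>i\<in>UNIV. \<Sum>j\<in>UNIV. u i * u j * \<rho> i j ^ q)" for q
  define T where "T n = ac n / (2 * real n + 1) / (2 * pi) * r^(2*n+2) * Q (2*n+2)" for n
  have lt: "\<bar>r * \<rho> i j\<bar> < 1" for i j
  proof -
    have "\<bar>r * \<rho> i j\<bar> = r * \<bar>\<rho> i j\<bar>" using r by (simp add: abs_mult)
    also have "\<dots> \<le> r" using rb[of i j] r by (simp add: mult_left_le)
    finally show ?thesis using r by simp
  qed
  have "(\<lambda>n. \<Sum>i\<in>UNIV. \<Sum>j\<in>UNIV. u i * u j * (ac n / (2 * real n + 1) / (2 * pi) * (r * \<rho> i j)^(2*n+2)))
      sums (\<Sum>i\<in>UNIV. \<Sum>j\<in>UNIV. u i * u j * (hk (r * \<rho> i j) - r * \<rho> i j / 4))"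
    by (intro sums_sum sums_mult hk_series lt)
  moreover have "(\<Sum>i\<in>UNIV. \<Sum>j\<in>UNIV. u i * u j * (ac n / (2 * real n + 1) / (2 * pi) * (r * \<rho> i j)^(2*n+2))) = T n" for n
    unfolding T_def Q_def sum_distrib_left power_mult_distrib
    by (intro sum.cong refl) (simp add: ac_simps)
  ultimately have S: "T sums (\<Sum>i\<in>UNIV. \<Sum>j\<in>UNIV. u i * u j * (hk (r * \<rho> i j) - r * \<rho> i j / 4))"
    by simp
  have Tnn: "0 \<le> T n" for n
    unfolding T_def using ac_pos[of n] psd[of "2*n+2"] r unfolding Q_def
    by (intro mult_nonneg_nonneg divide_nonneg_nonneg) auto
  have split: "(\<Sum>i\<in>UNIV. \<Sum>j\<in>UNIV. u i * u j * hk (r * \<rho> i j)) =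
     r / 4 * Q 1 + (\<Sum>i\<in>UNIV. \<Sum>j\<in>UNIV. u i * u j * (hk (r * \<rho> i j) - r * \<rho> i j / 4))"
    unfolding Q_def sum_distrib_left sum.distrib[symmetric]
    by (intro sum.cong refl) (simp add: algebra_simps)
  have Q1: "0 \<le> r / 4 * Q 1" using psd[of 1] r unfolding Q_def by simp
  have s0: "0 \<le> (\<Sum>i\<in>UNIV. \<Sum>j\<in>UNIV. u i * u j * (hk (r * \<rho> i j) - r * \<rho> i j / 4))"
    by (rule sums_term_le(2)[OF S Tnn])
  have sk: "T k \<le> (\<Sum>i\<in>UNIV. \<Sum>j\<in>UNIV. u i * u j * (hk (r * \<rho> i j) - r * \<rho> i j / 4))"
    by (rule sums_term_le(1)[OF S Tnn])
  show "r / 4 * (\<Sum>i\<in>UNIV. \<Sum>j\<in>UNIV. u i * u j * \<rho> i j ^ 1)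
          \<le> (\<Sum>i\<in>UNIV. \<Sum>j\<in>UNIV. u i * u j * hk (r * \<rho> i j))"
    using s0 unfolding split Q_def by linarith
  show "ac k / (2 * real k + 1) / (2 * pi) * r^(2*k+2) * (\<Sum>i\<in>UNIV. \<Sum>j\<in>UNIV. u i * u j * \<rho> i j ^ (2*k+2))
          \<le> (\<Sum>i\<in>UNIV. \<Sum>j\<in>UNIV. u i * u j * hk (r * \<rho> i j))"
    using sk Q1 unfolding split unfolding T_def Q_def by linarith
qed

lemma limit_le1:
  fixes f g :: "real \<Rightarrow> real"
  assumes "continuous_on {0..1} f" "continuous_on {0..1} g"
    and "\<And>r. 0 < r \<Longrightarrow> r < 1 \<Longrightarrow> g r \<le> f r"
  shows "g 1 \<le> f 1"
proof -
  have e: "at (1::real) within {0..1} = at_left 1" by (rule at_within_Icc_at_left) simp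
  have F1: "(f \<longlongrightarrow> f 1) (at_left 1)"
    using assms(1) unfolding continuous_on_def e[symmetric] by simp
  have F2: "(g \<longlongrightarrow> g 1) (at_left 1)"
    using assms(2) unfolding continuous_on_def e[symmetric] by simp
  note F = F1 F2
  have "eventually (\<lambda>r. g r \<le> f r) (at_left (1::real))"
    using eventually_at_left_real[of 0 "1::real"] by (rule eventually_mono) (use assms(3) in auto)
  thus ?thesis using tendsto_le[OF trivial_limit_at_left_real F(1) F(2)] by simp
qed

lemma kernel_main:
  fixes u :: "'n::finite \<Rightarrow> real" and \<rho> :: "'n \<Rightarrow> 'n \<Rightarrow> real"
  assumes rb: "\<And>i j. \<bar>\<rho> i j\<bar> \<le> 1"
    and psd: "\<And>q. 0 \<le> (\<Sum>i\<in>UNIV. \<Sum>j\<in>UNIV. u i * u j * \<rho> i j ^ q)"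
  shows "1 / 4 * (\<Sum>i\<in>UNIV. \<Sum>j\<in>UNIV. u i * u j * \<rho> i j ^ 1)
          \<le> (\<Sum>i\<in>UNIV. \<Sum>j\<in>UNIV. u i * u j * hk (\<rho> i j))"
    and "ac k / (2 * real k + 1) / (2 * pi) * (\<Sum>i\<in>UNIV. \<Sum>j\<in>UNIV. u i * u j * \<rho> i j ^ (2*k+2))
          \<le> (\<Sum>i\<in>UNIV. \<Sum>j\<in>UNIV. u i * u j * hk (\<rho> i j))"
proof -
  have rr: "-1 \<le> r * \<rho> i j \<and> r * \<rho> i j \<le> 1" if "r \<in> {0..1}" for r i j
  proof -
    have "\<bar>r * \<rho> i j\<bar> \<le> 1" using that rb[of i j]
      by (auto simp: abs_mult intro: mult_le_one)
    thus ?thesis by auto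
  qed
  have cf: "continuous_on {0..1} (\<lambda>r. \<Sum>i\<in>UNIV. \<Sum>j\<in>UNIV. u i * u j * hk (r * \<rho> i j))"
    unfolding hk_def by (intro continuous_intros) (use rr in auto)
  have c1: "continuous_on {0..1} (\<lambda>r. r / 4 * (\<Sum>i\<in>UNIV. \<Sum>j\<in>UNIV. u i * u j * \<rho> i j ^ 1))"
    by (intro continuous_intros) auto
  have c2: "continuous_on {0..1} (\<lambda>r. ac k / (2 * real k + 1) / (2 * pi) * r^(2*k+2) * (\<Sum>i\<in>UNIV. \<Sum>j\<in>UNIV. u i * u j * \<rho> i j ^ (2*k+2)))"
    by (intro continuous_intros)
  show "1 / 4 * (\<Sum>i\<in>UNIV. \<Sum>j\<in>UNIV. u i * u j * \<rho> i j ^ 1)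
          \<le> (\<Sum>i\<in>UNIV. \<Sum>j\<in>UNIV. u i * u j * hk (\<rho> i j))"
    using limit_le1[OF cf c1] kernel_r(1)[OF rb psd] by simp
  show "ac k / (2 * real k + 1) / (2 * pi) * (\<Sum>i\<in>UNIV. \<Sum>j\<in>UNIV. u i * u j * \<rho> i j ^ (2*k+2))
          \<le> (\<Sum>i\<in>UNIV. \<Sum>j\<in>UNIV. u i * u j * hk (\<rho> i j))"
    using limit_le1[OF cf c2] kernel_r(2)[OF rb psd] by simp
qed



definition PT :: "real^'d::finite \<Rightarrow> nat \<Rightarrow> (nat \<Rightarrow> 'd) \<Rightarrow> real" where
  "PT v q f = (\<Prod>t<q. v $ f t)"

abbreviation TT :: "nat \<Rightarrow> (nat \<Rightarrow> 'd::finite) set" where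
  "TT q \<equiv> PiE {..<q} (\<lambda>_. UNIV)"

lemma inner_pow_tensor:
  fixes v w :: "real^'d::finite"
  shows "(v \<bullet> w)^q = (\<Sum>f\<in>TT q. PT v q f * PT w q f)"
proof -
  have "(v \<bullet> w)^q = (\<Prod>t<q. \<Sum>k\<in>UNIV. v$k * w$k)" by (simp add: inner_vec_def)
  also have "\<dots> = (\<Sum>f\<in>TT q. \<Prod>t<q. v $ f t * w $ f t)"
    by (rule prod_sum_PiE) auto
  also have "\<dots> = (\<Sum>f\<in>TT q. PT v q f * PT w q f)"
    by (simp add: PT_def prod.distrib)
  finally show ?thesis .
qed

lemma tensor_bound:
  fixes x :: "'n::finite \<Rightarrow> real^'d::finite" and b :: "real^'d" and u :: "'n \<Rightarrow> real"
  shows "0 \<le> (\<Sum>i\<in>UNIV. \<Sum>j\<in>UNIV. u i * u j * (x i \<bullet> x j) ^ q)"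
    and "\<bar>\<Sum>i\<in>UNIV. u i * (b \<bullet> x i) ^ q\<bar> \<le> norm b ^ q * sqrt (\<Sum>i\<in>UNIV. \<Sum>j\<in>UNIV. u i * u j * (x i \<bullet> x j) ^ q)"
proof -
  define W where "W f = (\<Sum>i\<in>UNIV. u i * PT (x i) q f)" for f
  have fin: "finite (TT q :: (nat \<Rightarrow> 'd) set)" by (intro finite_PiE) auto
  have Q: "(\<Sum>i\<in>UNIV. \<Sum>j\<in>UNIV. u i * u j * (x i \<bullet> x j) ^ q) = (\<Sum>f\<in>TT q. (W f)\<^sup>2)"
  proof -
    have "(\<Sum>i\<in>UNIV. \<Sum>j\<in>UNIV. u i * u j * (x i \<bullet> x j) ^ q)
        = (\<Sum>i\<in>UNIV. \<Sum>j\<in>UNIV. \<Sum>f\<in>TT q. (u i * PT (x i) q f) * (u j * PT (x j) q f))"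
      by (intro sum.cong refl) (simp only: inner_pow_tensor sum_distrib_left mult_ac)
    also have "\<dots> = (\<Sum>i\<in>UNIV. \<Sum>f\<in>TT q. \<Sum>j\<in>UNIV. (u i * PT (x i) q f) * (u j * PT (x j) q f))"
      by (rule sum.cong[OF refl], rule sum.swap)
    also have "\<dots> = (\<Sum>f\<in>TT q. \<Sum>i\<in>UNIV. \<Sum>j\<in>UNIV. (u i * PT (x i) q f) * (u j * PT (x j) q f))"
      by (rule sum.swap)
    also have "\<dots> = (\<Sum>f\<in>TT q. (W f)\<^sup>2)"
      by (simp add: W_def power2_eq_square sum_product)
    finally show ?thesis .
  qed
  thus "0 \<le> (\<Sum>i\<in>UNIV. \<Sum>j\<in>UNIV. u i * u j * (x i \<bullet> x j) ^ q)"
    by (simp add: sum_nonneg)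
  have L: "(\<Sum>i\<in>UNIV. u i * (b \<bullet> x i) ^ q) = (\<Sum>f\<in>TT q. PT b q f * W f)"
  proof -
    have "(\<Sum>i\<in>UNIV. u i * (b \<bullet> x i) ^ q) = (\<Sum>i\<in>UNIV. \<Sum>f\<in>TT q. PT b q f * (u i * PT (x i) q f))"
      by (simp add: inner_pow_tensor sum_distrib_left ac_simps)
    also have "\<dots> = (\<Sum>f\<in>TT q. PT b q f * W f)"
      by (simp add: sum.swap[of _ UNIV] W_def sum_distrib_left)
    finally show ?thesis .
  qed
  have B: "(\<Sum>f\<in>TT q. (PT b q f)\<^sup>2) = (norm b ^ q)\<^sup>2"
  proof -
    have "(\<Sum>f\<in>TT q. (PT b q f)\<^sup>2) = (b \<bullet> b)^q" by (simp add: inner_pow_tensor power2_eq_square)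
    also have "\<dots> = (norm b ^ q)\<^sup>2" by (simp add: power2_norm_eq_inner[symmetric] power_mult[symmetric] power_mult_distrib[symmetric] mult.commute)
    finally show ?thesis .
  qed
  have "(\<Sum>i\<in>UNIV. u i * (b \<bullet> x i) ^ q)\<^sup>2 \<le> (norm b ^ q)\<^sup>2 * (\<Sum>i\<in>UNIV. \<Sum>j\<in>UNIV. u i * u j * (x i \<bullet> x j) ^ q)"
    unfolding L Q B[symmetric] by (rule Cauchy_Schwarz_ineq_sum)
  hence "sqrt ((\<Sum>i\<in>UNIV. u i * (b \<bullet> x i) ^ q)\<^sup>2) \<le> sqrt ((norm b ^ q)\<^sup>2 * (\<Sum>i\<in>UNIV. \<Sum>j\<in>UNIV. u i * u j * (x i \<bullet> x j) ^ q))"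
    by (rule real_sqrt_le_mono)
  thus "\<bar>\<Sum>i\<in>UNIV. u i * (b \<bullet> x i) ^ q\<bar> \<le> norm b ^ q * sqrt (\<Sum>i\<in>UNIV. \<Sum>j\<in>UNIV. u i * u j * (x i \<bullet> x j) ^ q)"
    by (simp add: real_sqrt_mult)
qed


lemma H_entry: "H_inf x $ i $ j = hk (x i \<bullet> x j)"
  by (simp add: H_inf_def hk_def)

lemma quad_H: "u \<bullet> (H_inf x *v u) = (\<Sum>i\<in>UNIV. \<Sum>j\<in>UNIV. u$i * u$j * hk (x i \<bullet> x j))"
  unfolding inner_vec_def[where x=u] matrix_vector_mult_def H_entry vec_lambda_beta sum_distrib_left
  by (intro sum.cong refl) (simp only: inner_real_def sum_distrib_left mult_ac)

lemma rho_bound: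
  fixes x :: "'n::finite \<Rightarrow> real ^ 'd::finite"
  assumes unit: "\<And>i. norm (x i) = 1"
  shows "\<bar>x i \<bullet> x j\<bar> \<le> 1"
  using Cauchy_Schwarz_ineq2[of "x i" "x j"] unit by simp

lemma const_bound:
  "ac k / (2 * real k + 1) / (2 * pi) * (9 * (real (2*k+2))\<^sup>2) \<ge> 1"
proof -
  have a: "ac k * (real k + 1) \<ge> 1" using ac_lower[of k] by (simp add: field_simps)
  have p: "pi \<le> 4" using pi_less_4 by simp
  have "(2 * real k + 1) * (2 * pi) \<le> (2 * real k + 1) * (2 * 4)"
    by (intro mult_left_mono) (use p in auto)
  also have "\<dots> \<le> 36 * (real k + 1)" by simp
  also have "\<dots> \<le> 36 * (real k + 1) * (ac k * (real k + 1))"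
    using a by (simp add: mult_le_cancel_left1)
  also have "\<dots> = ac k * (9 * (real (2*k+2))\<^sup>2)" by (simp add: power2_eq_square algebra_simps)
  finally have le: "(2 * real k + 1) * (2 * pi) \<le> ac k * (9 * (real (2*k+2))\<^sup>2)" .
  have pos: "(2 * real k + 1) * (2 * pi) > 0" by (simp add: add_pos_nonneg)
  have "ac k / (2 * real k + 1) / (2 * pi) * (9 * (real (2*k+2))\<^sup>2)
     = ac k * (9 * (real (2*k+2))\<^sup>2) / ((2 * real k + 1) * (2 * pi))" by simp
  also have "1 \<le> \<dots>" using le pos by (simp add: pos_le_divide_eq)
  finally show ?thesis by simp
qed

lemma per_term:
  fixes x :: "'n::finite \<Rightarrow> real ^ 'd::finite" and u :: "real ^ 'n" and b :: "real ^ 'd"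
  assumes unit: "\<And>i. norm (x i) = 1"
    and q: "q = 1 \<or> (even q \<and> q \<ge> 2)"
  shows "\<bar>\<Sum>i\<in>UNIV. u$i * (b \<bullet> x i) ^ q\<bar> \<le> 3 * real q * norm b ^ q * sqrt (u \<bullet> (H_inf x *v u))"
    and "0 \<le> u \<bullet> (H_inf x *v u)"
proof -
  define s where "s = u \<bullet> (H_inf x *v u)"
  define Q where "Q q = (\<Sum>i\<in>UNIV. \<Sum>j\<in>UNIV. u$i * u$j * (x i \<bullet> x j) ^ q)" for q
  have rb: "\<And>i j. \<bar>x i \<bullet> x j\<bar> \<le> 1" using rho_bound unit by blast
  have psd: "\<And>q. 0 \<le> Q q" unfolding Q_def by (rule tensor_bound(1))
  have sQ: "s = (\<Sum>i\<in>UNIV. \<Sum>j\<in>UNIV. u$i * u$j * hk (x i \<bullet> x j))" unfolding s_def by (rule quad_H)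
  note km = kernel_main[of "\<lambda>i j. x i \<bullet> x j" "\<lambda>i. u$i", OF rb psd[unfolded Q_def], folded sQ Q_def]
  show s0: "0 \<le> u \<bullet> (H_inf x *v u)" using km(1) psd[of 1] unfolding s_def[symmetric] by linarith
  have QB: "Q q \<le> 9 * (real q)\<^sup>2 * s"
    using q
  proof
    assume "q = 1"
    thus ?thesis using km(1) s0 unfolding s_def[symmetric] by simp
  next
    assume "even q \<and> q \<ge> 2"
    then obtain k' where k': "q = 2*k'" "k' \<ge> 1" by (auto elim!: evenE)
    define k where "k = k' - 1"
    have k: "q = 2*k+2" using k' unfolding k_def by simp
    define c where "c = ac k / (2 * real k + 1) / (2 * pi)"
    have c0: "c > 0" unfolding c_def using ac_pos[of k] by simp
    have cQ: "c * Q q \<le> s" using km(2)[of k] k unfolding c_def by simp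
    have c1: "1 \<le> c * (9 * (real q)\<^sup>2)" unfolding c_def k by (rule const_bound)
    have "1 * Q q \<le> c * (9 * (real q)\<^sup>2) * Q q" by (rule mult_right_mono[OF c1 psd])
    hence "Q q \<le> c * (9 * (real q)\<^sup>2) * Q q" by simp
    also have "\<dots> = 9 * (real q)\<^sup>2 * (c * Q q)" by simp
    also have "\<dots> \<le> 9 * (real q)\<^sup>2 * s" using cQ by (intro mult_left_mono) auto
    finally show ?thesis .
  qed
  have "\<bar>\<Sum>i\<in>UNIV. u$i * (b \<bullet> x i) ^ q\<bar> \<le> norm b ^ q * sqrt (Q q)"
    unfolding Q_def by (rule tensor_bound(2))
  also have "\<dots> \<le> norm b ^ q * sqrt (9 * (real q)\<^sup>2 * s)"
    using QB by (intro mult_left_mono real_sqrt_le_mono) auto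
  also have "\<dots> = 3 * real q * norm b ^ q * sqrt s"
    by (simp add: real_sqrt_mult)
  finally show "\<bar>\<Sum>i\<in>UNIV. u$i * (b \<bullet> x i) ^ q\<bar> \<le> 3 * real q * norm b ^ q * sqrt (u \<bullet> (H_inf x *v u))"
    unfolding s_def .
qed

lemma H_invertible:
  fixes x :: "'n::finite \<Rightarrow> real ^ 'd::finite"
  assumes pd: "pos_def_mat (H_inf x)"
  shows "H_inf x *v (matrix_inv (H_inf x) *v y) = y"
proof -
  let ?H = "H_inf x"
  have "inj ((*v) ?H)"
  proof (rule injI)
    fix v w assume "?H *v v = ?H *v w"
    hence "?H *v (v - w) = 0" by (simp add: matrix_vector_mult_diff_distrib)
    hence "\<not> (v - w \<noteq> 0)" using pd unfolding pos_def_mat_def by (metis inner_zero_right less_irrefl)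
    thus "v = w" by simp
  qed
  hence "invertible ?H" using matrix_left_invertible_injective invertible_left_inverse by blast
  hence "\<exists>A'. ?H ** A' = mat 1 \<and> A' ** ?H = mat 1" unfolding invertible_def .
  hence "?H ** matrix_inv ?H = mat 1" unfolding matrix_inv_def by (rule someI_ex[THEN conjunct1])
  thus ?thesis by (simp add: matrix_vector_mul_assoc)
qed

theorem corollary6p1:
  fixes x :: "'n::finite \<Rightarrow> real ^ 'd::finite"
    and y :: "real ^ 'n"
    and m :: nat
    and p :: "nat \<Rightarrow> nat"
    and \<beta> :: "nat \<Rightarrow> real ^ 'd"
    and \<alpha> :: "nat \<Rightarrow> real"
  assumes unit: "\<And>i. norm (x i) = 1"
    and pd: "pos_def_mat (H_inf x)"
    and p_cond: "\<And>j. j < m \<Longrightarrow> p j = 1 \<or> (even (p j) \<and> p j \<ge> 2)"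
    and y_def: "\<And>i. y $ i = (\<Sum>j<m. \<alpha> j * (\<beta> j \<bullet> x i) ^ p j)"
  shows "sqrt (y \<bullet> (matrix_inv (H_inf x) *v y))
           \<le> 3 * (\<Sum>j<m. real (p j) * \<bar>\<alpha> j\<bar> * norm (\<beta> j) ^ p j)"
proof -
  define u where "u = matrix_inv (H_inf x) *v y"
  define s where "s = y \<bullet> u"
  define R where "R = 3 * (\<Sum>j<m. real (p j) * \<bar>\<alpha> j\<bar> * norm (\<beta> j) ^ p j)"
  have yHu: "y = H_inf x *v u" unfolding u_def using H_invertible[OF pd] by simp
  have s_eq: "s = u \<bullet> (H_inf x *v u)" unfolding s_def by (subst yHu) (simp add: inner_commute)
  have s0: "0 \<le> s" unfolding s_eq by (rule per_term(2)[OF unit, of 1]) simp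
  have R0: "0 \<le> R" unfolding R_def by (intro mult_nonneg_nonneg sum_nonneg) auto
  have "s = (\<Sum>i\<in>UNIV. u$i * (\<Sum>j<m. \<alpha> j * (\<beta> j \<bullet> x i) ^ p j))"
    unfolding s_def inner_vec_def[where x=y] inner_real_def y_def by (intro sum.cong refl) (rule mult.commute)
  also have "\<dots> = (\<Sum>j<m. \<alpha> j * (\<Sum>i\<in>UNIV. u$i * (\<beta> j \<bullet> x i) ^ p j))"
  proof -
    have "(\<Sum>i\<in>UNIV. u$i * (\<Sum>j<m. \<alpha> j * (\<beta> j \<bullet> x i) ^ p j))
        = (\<Sum>i\<in>UNIV. \<Sum>j<m. \<alpha> j * (u$i * (\<beta> j \<bullet> x i) ^ p j))"
      unfolding sum_distrib_left by (intro sum.cong refl) (simp only: mult_ac)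
    also have "\<dots> = (\<Sum>j<m. \<Sum>i\<in>UNIV. \<alpha> j * (u$i * (\<beta> j \<bullet> x i) ^ p j))"
      by (rule sum.swap)
    also have "\<dots> = (\<Sum>j<m. \<alpha> j * (\<Sum>i\<in>UNIV. u$i * (\<beta> j \<bullet> x i) ^ p j))"
      by (simp only: sum_distrib_left)
    finally show ?thesis .
  qed
  also have "\<dots> \<le> (\<Sum>j<m. \<bar>\<alpha> j\<bar> * (3 * real (p j) * norm (\<beta> j) ^ p j * sqrt s))"
  proof (rule sum_mono)
    fix j assume "j \<in> {..<m}"
    hence pj: "p j = 1 \<or> (even (p j) \<and> p j \<ge> 2)" using p_cond by simp
    have "\<alpha> j * (\<Sum>i\<in>UNIV. u$i * (\<beta> j \<bullet> x i) ^ p j) \<le> \<bar>\<alpha> j\<bar> * \<bar>\<Sum>i\<in>UNIV. u$i * (\<beta> j \<bullet> x i) ^ p j\<bar>"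
      using abs_ge_self[of "\<alpha> j * (\<Sum>i\<in>UNIV. u$i * (\<beta> j \<bullet> x i) ^ p j)"] by (simp only: abs_mult)
    also have "\<dots> \<le> \<bar>\<alpha> j\<bar> * (3 * real (p j) * norm (\<beta> j) ^ p j * sqrt s)"
      using per_term(1)[OF unit pj, of u "\<beta> j"] unfolding s_eq by (intro mult_left_mono) auto
    finally show "\<alpha> j * (\<Sum>i\<in>UNIV. u$i * (\<beta> j \<bullet> x i) ^ p j) \<le> \<bar>\<alpha> j\<bar> * (3 * real (p j) * norm (\<beta> j) ^ p j * sqrt s)" .
  qed
  also have "\<dots> = sqrt s * R"
  proof -
    have "sqrt s * R = (\<Sum>j<m. sqrt s * (3 * (real (p j) * \<bar>\<alpha> j\<bar> * norm (\<beta> j) ^ p j)))"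
      unfolding R_def by (simp only: sum_distrib_left)
    also have "\<dots> = (\<Sum>j<m. \<bar>\<alpha> j\<bar> * (3 * real (p j) * norm (\<beta> j) ^ p j * sqrt s))"
      by (intro sum.cong refl) (simp only: mult_ac)
    finally show ?thesis by simp
  qed
  finally have sR: "s \<le> sqrt s * R" .
  have "sqrt s \<le> R"
  proof (cases "s = 0")
    case True thus ?thesis using R0 by simp
  next
    case False
    hence sp: "sqrt s > 0" using s0 by simp
    have "sqrt s * sqrt s \<le> sqrt s * R" using sR s0 by simp
    thus ?thesis by (rule mult_left_le_imp_le[OF _ sp])
  qed
  thus ?thesis unfolding s_def u_def R_def .
qed

end
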